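(* Let $n \ge 2$ be an integer. If $M$ is a real $n\times n$ matrix whose entries are a permutation of $0,1,\dots,n^2-1$, then $$|\det M| \le n^n\,\frac{n^2-1}{2}\left(\frac{n^3+n^2+n+1}{12}\right)^{\frac{n-1}{2}}.$$ If $M$ is a real $n\times n$ matrix whose entries are a permutation of $1,2,\dots,n^2$, then $$|\det M| \le n^n\,\frac{n^2+1}{2}\left(\frac{n^3+n^2+n+1}{12}\right)^{\frac{n-1}{2}}.$$ *)

theory Defs
  imports "HOL-Analysis.Analysis"
begin

end

theory Submission
  imports Defs
begin


lemma row_chi: "row l ((\<chi> i. f i) :: real^'n^'m) = f l"
  by (simp add: row_def vec_eq_iff)

lemma hadamard_aux:
  fixes A :: "real^'n^'n"
  assumes "finite K"
  shows "\<exists>B. det B = det A \<and> (\<forall>i. norm (row i B) \<le> norm (row i A)) \<and>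
             (\<forall>i\<in>K. \<forall>j. j \<noteq> i \<longrightarrow> orthogonal (row i B) (row j B))"
  using assms
proof (induction K rule: finite_induct)
  case empty
  show ?case by (rule exI[of _ A]) auto
next
  case (insert k K)
  then obtain B where B: "det B = det A" "\<forall>i. norm (row i B) \<le> norm (row i A)"
     "\<forall>i\<in>K. \<forall>j. j \<noteq> i \<longrightarrow> orthogonal (row i B) (row j B)" by blast
  define W where "W = {row j B |j. j \<noteq> k}"
  obtain p z where p: "p \<in> span W" and z: "\<And>w. w \<in> span W \<Longrightarrow> orthogonal z w"
     and pz: "row k B = p + z"
    using orthogonal_subspace_decomp_exists[of W "row k B"] by metis
  define B' where "B' = (\<chi> l. if l = k then row k B + (- p) else row l B)"
  have "- p \<in> vec.span W" using p by (simp add: span_vec_eq span_neg)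
  then have d: "det B' = det B" unfolding B'_def W_def by (rule det_row_span)
  have rk: "row k B' = z" using pz by (simp add: B'_def row_chi)
  have rl: "l \<noteq> k \<Longrightarrow> row l B' = row l B" for l by (simp add: B'_def row_chi)
  have inW: "l \<noteq> k \<Longrightarrow> row l B \<in> span W" for l unfolding W_def by (rule span_base) blast
  have "orthogonal z p" using z p by blast
  then have "(norm (row k B))\<^sup>2 = (norm z)\<^sup>2 + (norm p)\<^sup>2"
    using pz norm_add_Pythagorean[of z p] by (simp add: add.commute)
  then have "norm z \<le> norm (row k B)"
    by (metis le_add_same_cancel1 norm_ge_zero power2_le_imp_le zero_le_power2)
  then have n: "norm (row i B') \<le> norm (row i A)" for i
    using B(2) rk rl by (metis order.trans)
  have o: "orthogonal (row i B') (row j B')" if "i \<in> insert k K" "j \<noteq> i" for i j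
  proof (cases "i = k")
    case True
    then show ?thesis using that rk rl z inW by auto
  next
    case False
    show ?thesis
    proof (cases "j = k")
      case True
      then show ?thesis using False rk rl z inW by (metis orthogonal_commute)
    next
      case False2: False
      then show ?thesis using False that B(3) rl by auto
    qed
  qed
  show ?case by (rule exI[of _ B']) (use d B(1) n o in auto)
qed

lemma hadamard:
  fixes A :: "real^'n^'n"
  shows "\<bar>det A\<bar> \<le> (\<Prod>i\<in>UNIV. norm (row i A))"
proof -
  obtain B where B: "det B = det A" "\<forall>i. norm (row i B) \<le> norm (row i A)"
     "\<forall>i. \<forall>j. j \<noteq> i \<longrightarrow> orthogonal (row i B) (row j B)"
    using hadamard_aux[of "UNIV::'n set" A] by auto
  have "det (B ** transpose B) = (\<Prod>i\<in>UNIV. (B ** transpose B) $ i $ i)"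
    by (rule det_diagonal) (use B(3) in \<open>auto simp: matrix_mult_transpose_dot_row orthogonal_def\<close>)
  also have "\<dots> = (\<Prod>i\<in>UNIV. (norm (row i B))\<^sup>2)"
    by (simp add: matrix_mult_transpose_dot_row power2_norm_eq_inner)
  also have "\<dots> = (\<Prod>i\<in>UNIV. norm (row i B))\<^sup>2"
    by (simp add: prod_power_distrib)
  finally have "(det B)\<^sup>2 = (\<Prod>i\<in>UNIV. norm (row i B))\<^sup>2"
    by (simp add: det_mul power2_eq_square)
  then have "\<bar>det B\<bar> = (\<Prod>i\<in>UNIV. norm (row i B))"
  proof -
    have "0 \<le> (\<Prod>i\<in>UNIV. norm (row i B))" by (simp add: prod_nonneg)
    then show ?thesis using \<open>(det B)\<^sup>2 = _\<close>
      by (metis abs_ge_zero power2_abs power2_eq_iff_nonneg)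
  qed
  also have "\<dots> \<le> (\<Prod>i\<in>UNIV. norm (row i A))"
    by (rule prod_mono) (use B(2) in auto)
  finally show ?thesis using B(1) by simp
qed



lemma amgm:
  fixes y :: "'a \<Rightarrow> real"
  assumes "finite A" "A \<noteq> {}" "\<And>i. i \<in> A \<Longrightarrow> y i \<ge> 0"
  shows "(\<Prod>i\<in>A. y i) \<le> ((\<Sum>i\<in>A. y i) / card A) ^ card A"
proof -
  have c: "card A > 0" using assms by auto
  have p0: "(\<Prod>i\<in>A. y i) \<ge> 0" using assms(3) by (simp add: prod_nonneg)
  have "(\<Prod>i\<in>A. y i) powr (1 / card A) \<le> (\<Sum>i\<in>A. y i / card A)"
    using arith_geom_mean[OF assms] .
  also have "\<dots> = (\<Sum>i\<in>A. y i) / card A" by (simp add: sum_divide_distrib)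
  finally have h: "(\<Prod>i\<in>A. y i) powr (1 / card A) \<le> (\<Sum>i\<in>A. y i) / card A" .
  have "(\<Prod>i\<in>A. y i) = ((\<Prod>i\<in>A. y i) powr (1 / card A)) ^ card A"
  proof (cases "(\<Prod>i\<in>A. y i) = 0")
    case True then show ?thesis using c by simp
  next
    case False
    then have "(\<Prod>i\<in>A. y i) > 0" using p0 by simp
    then show ?thesis using c by (simp add: powr_realpow[symmetric] powr_powr)
  qed
  also have "\<dots> \<le> ((\<Sum>i\<in>A. y i) / card A) ^ card A"
    by (rule power_mono[OF h]) simp
  finally show ?thesis .
qed

lemma key_ineq:
  fixes n :: nat and D x t S :: real
  assumes n: "n \<ge> 2" and t0: "0 \<le> t" and tx: "t \<le> x" and xS: "x \<le> S" and St: "S \<le> n * t"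
    and D: "D\<^sup>2 \<le> x * ((S - x) / (real n - 1)) ^ (n - 1)"
  shows "\<bar>D\<bar> \<le> sqrt t * ((S - t) / (real n - 1)) powr ((real n - 1) / 2)"
proof -
  define m where "m = n - 1"
  have m1: "m \<ge> 1" and rm: "real n - 1 = real m" using n by (auto simp: m_def)
  define h where "h = (\<lambda>y::real. y * (S - y) ^ m)"
  have "h x \<le> h t"
  proof (rule DERIV_nonpos_imp_nonincreasing[OF tx])
    fix y assume y: "t \<le> y" "y \<le> x"
    have "DERIV h y :> (S - y) ^ m - y * (real m * (S - y) ^ (m - 1))"
      unfolding h_def by (auto intro!: derivative_eq_intros)
    moreover have "(S - y) ^ m - y * (real m * (S - y) ^ (m - 1)) = (S - y) ^ (m - 1) * (S - real (m+1) * y)"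
    proof -
      have "(S - y) ^ m = (S - y) ^ (m - 1) * (S - y)" using m1
        by (metis One_nat_def Suc_pred less_le_trans power_Suc2 zero_less_one)
      then show ?thesis by (simp add: algebra_simps)
    qed
    moreover have "(S - y) ^ (m - 1) * (S - real (m+1) * y) \<le> 0"
    proof -
      have "S - y \<ge> 0" using y xS by simp
      moreover have "S - real (m+1) * y \<le> 0"
      proof -
        have "real (m+1) = real n" using n by (simp add: m_def)
        have "real n * t \<le> real n * y" using y by (simp add: mult_left_mono)
        then have "S \<le> real (m+1) * y" unfolding \<open>real (m+1) = real n\<close> using St by linarith
        then show ?thesis by linarith
      qed
      ultimately show ?thesis by (simp add: mult_nonneg_nonpos)
    qed
    ultimately show "\<exists>d. DERIV h y :> d \<and> d \<le> 0" by auto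
  qed
  have mpos: "real m > 0" using m1 by simp
  have "D\<^sup>2 \<le> h x / real m ^ m"
    using D unfolding h_def rm m_def[symmetric] by (simp add: power_divide)
  also have "\<dots> \<le> h t / real m ^ m"
    using \<open>h x \<le> h t\<close> mpos by (simp add: divide_right_mono)
  also have "\<dots> = t * ((S - t) / real m) ^ m" unfolding h_def by (simp add: power_divide)
  finally have D2: "D\<^sup>2 \<le> t * ((S - t) / real m) ^ m" .
  have St0: "S - t \<ge> 0" using tx xS by simp
  have c0: "(S - t) / real m \<ge> 0" using St0 mpos by simp
  have "\<bar>D\<bar> = sqrt (D\<^sup>2)" by simp
  also have "\<dots> \<le> sqrt (t * ((S - t) / real m) ^ m)" using D2 by (rule real_sqrt_le_mono)
  also have "\<dots> = sqrt t * sqrt (((S - t) / real m) ^ m)" by (simp add: real_sqrt_mult)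
  also have "sqrt (((S - t) / real m) ^ m) = ((S - t) / real m) powr (real m / 2)"
  proof (cases "(S - t) / real m = 0")
    case True then show ?thesis using m1 by simp
  next
    case False
    then have cp: "(S - t) / real m > 0" using c0 by linarith
    have "sqrt (((S - t) / real m) ^ m) = (((S - t) / real m) ^ m) powr (1/2)"
      using cp by (simp add: powr_half_sqrt)
    also have "\<dots> = ((S - t) / real m) powr (real m / 2)"
      using cp by (simp add: powr_realpow[symmetric] powr_powr)
    finally show ?thesis .
  qed
  finally show ?thesis unfolding rm .
qed



lemma orth_norm:
  fixes P :: "real^'n^'n"
  assumes "orthogonal_matrix P"
  shows "norm (P *v v) = norm v"
proof -
  have "orthogonal_transformation (\<lambda>x. P *v x)"
    using assms by (simp add: orthogonal_transformation_matrix)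
  then show ?thesis by (simp add: orthogonal_transformation_norm)
qed

lemma norm2_vec: "(norm (v :: real^'n))\<^sup>2 = (\<Sum>j\<in>UNIV. (v $ j)\<^sup>2)"
  unfolding power2_norm_eq_inner inner_vec_def by (simp add: power2_eq_square)

lemma det_bound:
  fixes M :: "real^'n^'n"
  assumes n: "CARD('n) \<ge> 2"
    and T: "T = (\<Sum>i\<in>UNIV. \<Sum>j\<in>UNIV. M $ i $ j)"
    and S: "S = (\<Sum>i\<in>UNIV. \<Sum>j\<in>UNIV. (M $ i $ j)\<^sup>2)"
    and T0: "T \<ge> 0"
    and St: "S \<le> real CARD('n) * (T / real CARD('n))\<^sup>2"
  shows "\<bar>det M\<bar> \<le> T / real CARD('n) * ((S - (T / real CARD('n))\<^sup>2) / (real CARD('n) - 1)) powr ((real CARD('n) - 1) / 2)"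
proof -
  let ?n = "CARD('n)"
  have npos: "real ?n > 0" using n by simp
  define u :: "real^'n" where "u = (\<chi> i. 1 / sqrt ?n)"
  have "(norm u)\<^sup>2 = 1" unfolding norm2_vec u_def using npos by (simp add: power_divide)
  then have nu: "norm u = 1" using norm_ge_zero[of u] by (auto simp: power2_eq_1_iff)
  fix k :: 'n
  obtain Q where Q: "orthogonal_matrix Q" "Q *v axis k 1 = u"
    using orthogonal_matrix_exists_basis[OF nu] by metis
  define N where "N = transpose Q ** transpose M"
  have dN: "\<bar>det N\<bar> = \<bar>det M\<bar>"
    using det_orthogonal_matrix[OF Q(1)] unfolding N_def by (auto simp: det_mul)
  have col: "column j N = transpose Q *v row j M" for j
    by (simp add: N_def column_def row_def matrix_matrix_mult_def matrix_vector_mult_def transpose_def vec_eq_iff)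
  have Qk: "Q $ l $ k = u $ l" for l
    using Q(2) by (simp add: vec_eq_iff matrix_vector_mult_def axis_def if_distrib cong: if_cong)
  have rowk: "row k N = M *v u"
    by (simp add: N_def row_def matrix_matrix_mult_def matrix_vector_mult_def transpose_def vec_eq_iff Qk mult.commute)
  define y where "y = (\<lambda>i. (norm (row i N))\<^sup>2)"
  have sumy: "(\<Sum>i\<in>UNIV. y i) = S"
  proof -
    have "(\<Sum>i\<in>UNIV. y i) = (\<Sum>i\<in>UNIV. \<Sum>j\<in>UNIV. (N $ i $ j)\<^sup>2)"
      unfolding y_def norm2_vec by (simp add: row_def)
    also have "\<dots> = (\<Sum>j\<in>UNIV. \<Sum>i\<in>UNIV. (N $ i $ j)\<^sup>2)" by (rule sum.swap)
    also have "\<dots> = (\<Sum>j\<in>UNIV. (norm (column j N))\<^sup>2)"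
      unfolding norm2_vec by (simp add: column_def)
    also have "\<dots> = (\<Sum>j\<in>UNIV. (norm (row j M))\<^sup>2)"
      unfolding col using Q(1) orth_norm[of "transpose Q"] by (simp only: orthogonal_matrix_transpose)
    also have "\<dots> = S" unfolding S norm2_vec by (simp add: row_def)
    finally show ?thesis .
  qed
  define x where "x = y k"
  have y0: "y i \<ge> 0" for i unfolding y_def by simp
  have xS: "x \<le> S"
    unfolding x_def sumy[symmetric] by (rule member_le_sum) (use y0 in auto)
  have sumrest: "(\<Sum>i\<in>UNIV - {k}. y i) = S - x"
    unfolding x_def sumy[symmetric] by (simp add: sum_diff1)
  define s where "s = (\<lambda>j. \<Sum>l\<in>UNIV. M $ j $ l)"
  have x_eq: "x = (\<Sum>j\<in>UNIV. (s j)\<^sup>2) / ?n"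
  proof -
    have "x = (\<Sum>j\<in>UNIV. ((M *v u) $ j)\<^sup>2)" unfolding x_def y_def rowk norm2_vec ..
    also have "\<dots> = (\<Sum>j\<in>UNIV. (s j / sqrt ?n)\<^sup>2)"
      by (simp add: matrix_vector_mult_def u_def s_def sum_divide_distrib)
    also have "\<dots> = (\<Sum>j\<in>UNIV. (s j)\<^sup>2) / ?n"
      using npos by (simp add: power_divide sum_divide_distrib)
    finally show ?thesis .
  qed
  have Ts: "T = (\<Sum>j\<in>UNIV. s j)" unfolding T s_def ..
  have tx: "(T / ?n)\<^sup>2 \<le> x"
  proof -
    have "T\<^sup>2 \<le> (\<Sum>j\<in>UNIV. (s j)\<^sup>2) * ?n"
      unfolding Ts using sum_squared_le_sum_of_squares[of s UNIV] by simp
    then show ?thesis unfolding x_eq using npos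
      by (simp add: power_divide divide_simps power2_eq_square)
  qed
  have D: "(det N)\<^sup>2 \<le> x * ((S - x) / (real ?n - 1)) ^ (?n - 1)"
  proof -
    have "(det N)\<^sup>2 = \<bar>det N\<bar>\<^sup>2" by simp
    also have "\<dots> \<le> (\<Prod>i\<in>UNIV. norm (row i N))\<^sup>2"
      by (rule power_mono[OF hadamard]) simp
    also have "\<dots> = (\<Prod>i\<in>UNIV. y i)" unfolding y_def by (simp add: prod_power_distrib)
    also have "\<dots> = x * (\<Prod>i\<in>UNIV - {k}. y i)"
      unfolding x_def by (simp add: prod.remove)
    also have "\<dots> \<le> x * ((\<Sum>i\<in>UNIV - {k}. y i) / card (UNIV - {k} :: 'n set)) ^ card (UNIV - {k} :: 'n set)"
    proof (rule mult_left_mono)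
      have "card (UNIV - {k} :: 'n set) = ?n - 1" by (simp add: card_Diff_singleton)
      then have "UNIV - {k} \<noteq> {}" using n by (intro notI) simp
      then show "(\<Prod>i\<in>UNIV - {k}. y i) \<le> ((\<Sum>i\<in>UNIV - {k}. y i) / card (UNIV - {k} :: 'n set)) ^ card (UNIV - {k} :: 'n set)"
        by (intro amgm) (auto simp: y0)
    qed (simp add: x_def y0)
    also have "\<dots> = x * ((S - x) / (real ?n - 1)) ^ (?n - 1)"
      using n by (simp add: card_Diff_singleton sumrest of_nat_diff)
    finally show ?thesis .
  qed
  have t0: "0 \<le> (T / ?n)\<^sup>2" by simp
  have "\<bar>det N\<bar> \<le> sqrt ((T / ?n)\<^sup>2) * ((S - (T / ?n)\<^sup>2) / (real ?n - 1)) powr ((real ?n - 1) / 2)"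
    by (rule key_ineq[OF n t0 tx xS St D])
  then show ?thesis using dN T0 npos by simp
qed



lemma sum_bij_entries:
  fixes M :: "real^'n^'n" and A :: "nat set"
  assumes "bij_betw (\<lambda>(i, j). M $ i $ j) UNIV (real ` A)"
  shows "(\<Sum>i\<in>UNIV. \<Sum>j\<in>UNIV. g (M $ i $ j)) = (\<Sum>k\<in>A. g (real k))"
proof -
  have "(\<Sum>i\<in>UNIV. \<Sum>j\<in>UNIV. g (M $ i $ j)) = (\<Sum>(i,j)\<in>UNIV \<times> UNIV. g (M $ i $ j))"
    by (rule sum.cartesian_product)
  also have "\<dots> = (\<Sum>p\<in>UNIV. g ((\<lambda>(i, j). M $ i $ j) p))"
    by (simp only: UNIV_Times_UNIV case_prod_unfold)
  also have "\<dots> = (\<Sum>v\<in>real ` A. g v)" by (rule sum.reindex_bij_betw[OF assms])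
  also have "\<dots> = (\<Sum>k\<in>A. g (real k))" by (simp add: sum.reindex)
  finally show ?thesis .
qed

lemma s1a: "(\<Sum>k<m. real k) = real m * (real m - 1) / 2"
  by (induction m) (auto simp: field_simps)
lemma s2a: "(\<Sum>k<m. (real k)\<^sup>2) = real m * (real m - 1) * (2 * real m - 1) / 6"
  by (induction m) (auto simp: field_simps power2_eq_square)
lemma s1b: "(\<Sum>k\<in>{1..m}. real k) = real m * (real m + 1) / 2"
  by (induction m) (auto simp: field_simps)
lemma s2b: "(\<Sum>k\<in>{1..m}. (real k)\<^sup>2) = real m * (real m + 1) * (2 * real m + 1) / 6"
  by (induction m) (auto simp: field_simps power2_eq_square)

lemma powr_alg:
  fixes N :: nat and c :: real
  assumes "N \<ge> 2" "c \<ge> 0"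
  shows "((real N)\<^sup>2 * c) powr ((real N - 1) / 2) = real N ^ (N - 1) * c powr ((real N - 1) / 2)"
proof -
  have np: "real N > 0" using assms by simp
  have "((real N)\<^sup>2 * c) powr ((real N - 1) / 2) = ((real N)\<^sup>2) powr ((real N - 1) / 2) * c powr ((real N - 1) / 2)"
    using assms by (simp add: powr_mult)
  also have "((real N)\<^sup>2) powr ((real N - 1) / 2) = real N powr (real N - 1)"
  proof -
    have "(real N)\<^sup>2 = real N powr 2" using np by (simp add: powr_numeral)
    then have "((real N)\<^sup>2) powr ((real N - 1) / 2) = (real N powr 2) powr ((real N - 1) / 2)"
      by (simp only:)
    also have "\<dots> = real N powr (2 * ((real N - 1) / 2))" by (rule powr_powr)
    also have "2 * ((real N - 1) / 2) = real N - 1" by simp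
    finally show ?thesis .
  qed
  also have "real N powr (real N - 1) = real N ^ (N - 1)"
  proof -
    have e: "real N - 1 = real (N - 1)" using assms by (simp add: of_nat_diff)
    have "real N powr real (N - 1) = real N ^ (N - 1)" by (rule powr_realpow[OF np])
    then show ?thesis by (simp only: e)
  qed
  finally show ?thesis .
qed

lemma finish:
  fixes N :: nat and d T S a c :: real
  assumes N: "N \<ge> 2" and Ta: "T / real N = real N * a"
    and Sc: "(S - (T / real N)\<^sup>2) / (real N - 1) = (real N)\<^sup>2 * c" and c: "c \<ge> 0"
    and d: "\<bar>d\<bar> \<le> T / real N * ((S - (T / real N)\<^sup>2) / (real N - 1)) powr ((real N - 1) / 2)"
  shows "\<bar>d\<bar> \<le> real N ^ N * a * c powr ((real N - 1) / 2)"
proof -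
  have "T / real N * ((S - (T / real N)\<^sup>2) / (real N - 1)) powr ((real N - 1) / 2)
      = real N * a * (real N ^ (N - 1) * c powr ((real N - 1) / 2))"
    by (subst Sc, subst powr_alg[OF N c], subst Ta) (rule refl)
  also have "\<dots> = (real N * real N ^ (N - 1)) * a * c powr ((real N - 1) / 2)" by simp
  also have "real N * real N ^ (N - 1) = real N ^ N"
  proof -
    obtain k where "N = Suc k" using N by (cases N) auto
    then show ?thesis by simp
  qed
  finally show ?thesis using d by simp
qed

theorem mainTheorem8:
  fixes M :: "real ^ 'n ^ 'n"
  assumes "CARD('n) \<ge> 2"
  shows "(bij_betw (\<lambda>(i, j). M $ i $ j) UNIV (real ` {0..<CARD('n)^2}) \<longrightarrow>
            \<bar>det M\<bar> \<le> real CARD('n) ^ CARD('n) * ((real CARD('n)^2 - 1) / 2) *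
              ((real CARD('n)^3 + real CARD('n)^2 + real CARD('n) + 1) / 12) powr ((real CARD('n) - 1) / 2))
       \<and> (bij_betw (\<lambda>(i, j). M $ i $ j) UNIV (real ` {1..CARD('n)^2}) \<longrightarrow>
            \<bar>det M\<bar> \<le> real CARD('n) ^ CARD('n) * ((real CARD('n)^2 + 1) / 2) *
              ((real CARD('n)^3 + real CARD('n)^2 + real CARD('n) + 1) / 12) powr ((real CARD('n) - 1) / 2))"
proof -
  let ?n = "CARD('n)"
  define N where "N = real ?n"
  have N2: "N \<ge> 2" using assms by (simp add: N_def)
  have Npos: "N > 0" using N2 by simp
  define c where "c = (N^3 + N^2 + N + 1) / 12"
  have c0: "c \<ge> 0" using Npos by (simp add: c_def)
  define T where "T = (\<Sum>i\<in>UNIV. \<Sum>j\<in>UNIV. M $ i $ j)"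
  define S where "S = (\<Sum>i\<in>UNIV. \<Sum>j\<in>UNIV. (M $ i $ j)\<^sup>2)"
  have rm: "real (?n ^ 2) = N^2" by (simp add: N_def)
  show ?thesis
  proof (intro conjI impI)
    assume b: "bij_betw (\<lambda>(i, j). M $ i $ j) UNIV (real ` {0..<?n^2})"
    have "T = (\<Sum>k\<in>{0..<?n^2}. real k)" unfolding T_def by (rule sum_bij_entries[OF b])
    also have "\<dots> = N^2 * (N^2 - 1) / 2" using s1a[of "?n^2"] rm by (simp add: atLeast0LessThan)
    finally have T: "T = N^2 * (N^2 - 1) / 2" .
    have "S = (\<Sum>k\<in>{0..<?n^2}. (real k)\<^sup>2)" unfolding S_def by (rule sum_bij_entries[OF b])
    also have "\<dots> = N^2 * (N^2 - 1) * (2 * N^2 - 1) / 6" using s2a[of "?n^2"] rm by (simp add: atLeast0LessThan)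
    finally have S: "S = N^2 * (N^2 - 1) * (2 * N^2 - 1) / 6" .
    have TN: "T / N = N * ((N^2 - 1) / 2)" using Npos unfolding T by (simp add: field_simps power2_eq_square)
    have T0: "T \<ge> 0" using N2 unfolding T by (simp add: mult_nonneg_nonneg)
    have diff: "N * (T / N)\<^sup>2 - S = N^2 * (N^2 - 1) / 12 * ((N - 2) * (3 * N^2 + 2 * N + 1) + 4)"
      unfolding TN S by (simp add: field_simps power2_eq_square)
    have "N^2 * (N^2 - 1) / 12 * ((N - 2) * (3 * N^2 + 2 * N + 1) + 4) \<ge> 0"
    proof -
      have "N * N \<ge> 2 * 2" using N2 by (intro mult_mono) auto
      then have "N^2 - 1 \<ge> 0" "N^2 + 1 \<ge> 0" "N^2 \<ge> 0" by (auto simp: power2_eq_square)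
      moreover have "N - 2 \<ge> 0" "3 * N^2 + 2 * N + 1 \<ge> 0" "3 * N^2 + 2 * N + 7 \<ge> 0" using N2 by auto
      ultimately have f1: "0 \<le> N^2 * (N^2 - 1) / 12" and f2: "0 \<le> (N - 2) * (3 * N^2 + 2 * N + 1) + 4"
        by (simp_all add: mult_nonneg_nonneg)
      show ?thesis by (rule mult_nonneg_nonneg[OF f1 f2])
    qed
    then have St: "S \<le> N * (T / N)\<^sup>2" using diff by linarith
    have db: "\<bar>det M\<bar> \<le> T / N * ((S - (T / N)\<^sup>2) / (N - 1)) powr ((N - 1) / 2)"
      unfolding N_def by (rule det_bound[OF assms T_def S_def T0 St[unfolded N_def]])
    have Sc: "(S - (T / N)\<^sup>2) / (N - 1) = N^2 * c"
    proof -
      have "S - (T / N)\<^sup>2 = N^2 * (N - 1) * c"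
        unfolding TN S c_def by (simp add: field_simps power2_eq_square power3_eq_cube)
      then show ?thesis using N2 by simp
    qed
    show "\<bar>det M\<bar> \<le> real ?n ^ ?n * ((real ?n^2 - 1) / 2) * ((real ?n^3 + real ?n^2 + real ?n + 1) / 12) powr ((real ?n - 1) / 2)"
    proof -
      have "\<bar>det M\<bar> \<le> real ?n ^ ?n * ((real ?n^2 - 1) / 2) * c powr ((real ?n - 1) / 2)"
        by (rule finish[OF assms TN[unfolded N_def] Sc[unfolded N_def] c0 db[unfolded N_def]])
      then show ?thesis by (simp only: c_def N_def)
    qed
  next
    assume b: "bij_betw (\<lambda>(i, j). M $ i $ j) UNIV (real ` {1..?n^2})"
    have "T = (\<Sum>k\<in>{1..?n^2}. real k)" unfolding T_def by (rule sum_bij_entries[OF b])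
    also have "\<dots> = N^2 * (N^2 + 1) / 2" using s1b[of "?n^2"] rm by simp
    finally have T: "T = N^2 * (N^2 + 1) / 2" .
    have "S = (\<Sum>k\<in>{1..?n^2}. (real k)\<^sup>2)" unfolding S_def by (rule sum_bij_entries[OF b])
    also have "\<dots> = N^2 * (N^2 + 1) * (2 * N^2 + 1) / 6" using s2b[of "?n^2"] rm by simp
    finally have S: "S = N^2 * (N^2 + 1) * (2 * N^2 + 1) / 6" .
    have TN: "T / N = N * ((N^2 + 1) / 2)" using Npos unfolding T by (simp add: field_simps power2_eq_square)
    have T0: "T \<ge> 0" unfolding T by simp
    have diff: "N * (T / N)\<^sup>2 - S = N^2 * (N^2 + 1) / 12 * ((N - 2) * (3 * N^2 + 2 * N + 7) + 12)"
      unfolding TN S by (simp add: field_simps power2_eq_square)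
    have "N^2 * (N^2 + 1) / 12 * ((N - 2) * (3 * N^2 + 2 * N + 7) + 12) \<ge> 0"
    proof -
      have "N * N \<ge> 2 * 2" using N2 by (intro mult_mono) auto
      then have "N^2 - 1 \<ge> 0" "N^2 + 1 \<ge> 0" "N^2 \<ge> 0" by (auto simp: power2_eq_square)
      moreover have "N - 2 \<ge> 0" "3 * N^2 + 2 * N + 1 \<ge> 0" "3 * N^2 + 2 * N + 7 \<ge> 0" using N2 by auto
      ultimately have f1: "0 \<le> N^2 * (N^2 + 1) / 12" and f2: "0 \<le> (N - 2) * (3 * N^2 + 2 * N + 7) + 12"
        by (simp_all add: mult_nonneg_nonneg)
      show ?thesis by (rule mult_nonneg_nonneg[OF f1 f2])
    qed
    then have St: "S \<le> N * (T / N)\<^sup>2" using diff by linarith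
    have db: "\<bar>det M\<bar> \<le> T / N * ((S - (T / N)\<^sup>2) / (N - 1)) powr ((N - 1) / 2)"
      unfolding N_def by (rule det_bound[OF assms T_def S_def T0 St[unfolded N_def]])
    have Sc: "(S - (T / N)\<^sup>2) / (N - 1) = N^2 * c"
    proof -
      have "S - (T / N)\<^sup>2 = N^2 * (N - 1) * c"
        unfolding TN S c_def by (simp add: field_simps power2_eq_square power3_eq_cube)
      then show ?thesis using N2 by simp
    qed
    show "\<bar>det M\<bar> \<le> real ?n ^ ?n * ((real ?n^2 + 1) / 2) * ((real ?n^3 + real ?n^2 + real ?n + 1) / 12) powr ((real ?n - 1) / 2)"
    proof -
      have "\<bar>det M\<bar> \<le> real ?n ^ ?n * ((real ?n^2 + 1) / 2) * c powr ((real ?n - 1) / 2)"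
        by (rule finish[OF assms TN[unfolded N_def] Sc[unfolded N_def] c0 db[unfolded N_def]])
      then show ?thesis by (simp only: c_def N_def)
    qed
  qed
qed


end
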